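(* Let $\gamma\in\mathcal{K}^{\mathcal{P}^{-1}}$ and $\Psi\in\mathcal{K}_{\mathrm{FxT}}$. Then there exist $\lambda\ge1$ and $\tilde\Psi\in\mathcal{K}_{\mathrm{FxT}}$ such that $\lambda\gamma^{\lambda-1}(s)\gamma'(s)\Psi(s)\ge\tilde\Psi(\gamma^\lambda(s))$ for all $s>0$.
   Context: $\mathcal{K}_\infty$ is the set of continuous strictly increasing unbounded $\alpha:\mathbb{R}_{\ge0}\to\mathbb{R}_{\ge0}$ with $\alpha(0)=0$. $\mathcal{K}^{\mathcal{P}}$ is the set of $\alpha\in\mathcal{K}_\infty$ of the form $\alpha(s)=\sum_{i=1}^nc_is^{p_i}$ with real $c_i\neq0$, $p_i>0$, and $\alpha'(s)>0$ for all $s>0$. $\mathcal{K}^{\mathcal{P}^{-1}}$ is the set of $\alpha\in\mathcal{K}_\infty$ with $\alpha^{-1}\in\mathcal{K}^{\mathcal{P}}$. $\mathcal{K}_{\mathrm{FxT}}$ is the set of functions $c_1s^{p_1}+c_2s^{p_2}$ with $c_1,c_2>0$, $p_1\in(0,1)$, $p_2>1$. $\gamma^\lambda(s)$ denotes $(\gamma(s))^\lambda$. *)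

theory Defs
  imports "HOL-Analysis.Analysis"
begin

text \<open>Functions on the nonnegative reals are represented as real \<Rightarrow> real;
only their values on {0..} matter.\<close>

definition K_inf :: "(real \<Rightarrow> real) \<Rightarrow> bool" where
  "K_inf \<alpha> \<longleftrightarrow> continuous_on {0..} \<alpha> \<and> strict_mono_on {0..} \<alpha> \<and> \<alpha> 0 = 0
     \<and> (\<forall>s\<ge>0. \<alpha> s \<ge> 0) \<and> (\<forall>M. \<exists>s\<ge>0. \<alpha> s > M)"

definition K_P :: "(real \<Rightarrow> real) \<Rightarrow> bool" where
  "K_P \<alpha> \<longleftrightarrow> K_inf \<alpha> \<and>
     (\<exists>(n::nat) (c::nat \<Rightarrow> real) (p::nat \<Rightarrow> real).
        (\<forall>i<n. c i \<noteq> 0 \<and> p i > 0) \<and> (\<forall>s\<ge>0. \<alpha> s = (\<Sum>i<n. c i * s powr p i))) \<and>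
     (\<forall>s>0. \<alpha> differentiable at s \<and> deriv \<alpha> s > 0)"

definition K_P_inv :: "(real \<Rightarrow> real) \<Rightarrow> bool" where
  "K_P_inv \<alpha> \<longleftrightarrow> K_inf \<alpha> \<and>
     (\<exists>\<beta>. K_P \<beta> \<and> (\<forall>s\<ge>0. \<beta> (\<alpha> s) = s) \<and> (\<forall>s\<ge>0. \<alpha> (\<beta> s) = s))"

definition K_FxT :: "(real \<Rightarrow> real) \<Rightarrow> bool" where
  "K_FxT \<Psi> \<longleftrightarrow> (\<exists>c1 c2 p1 p2. c1 > 0 \<and> c2 > 0 \<and> 0 < p1 \<and> p1 < 1 \<and> p2 > 1 \<and>
     (\<forall>s\<ge>0. \<Psi> s = c1 * s powr p1 + c2 * s powr p2))"

end

theory Submission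
  imports Defs
begin


lemma regroup:
  fixes c p :: "nat \<Rightarrow> real"
  assumes "\<forall>i<n. p i > 0"
  shows "\<exists>E d. finite E \<and> (\<forall>e\<in>E. e > 0 \<and> d e \<noteq> 0) \<and>
           (\<forall>t. (\<Sum>i<n. c i * t powr p i) = (\<Sum>e\<in>E. d e * t powr e))"
proof -
  define d where "d e = (\<Sum>i\<in>{i. i \<in> {..<n} \<and> p i = e}. c i)" for e
  define P where "P = p ` {..<n}"
  define E where "E = {e\<in>P. d e \<noteq> 0}"
  have fP: "finite P" unfolding P_def by simp
  have "(\<Sum>i<n. c i * t powr p i) = (\<Sum>e\<in>E. d e * t powr e)" for t
  proof -
    have "(\<Sum>i<n. c i * t powr p i) = (\<Sum>e\<in>P. \<Sum>i\<in>{i. i \<in> {..<n} \<and> p i = e}. c i * t powr p i)"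
      unfolding P_def by (rule sum.image_gen) simp
    also have "\<dots> = (\<Sum>e\<in>P. d e * t powr e)"
      unfolding d_def sum_distrib_right by (intro sum.cong refl) auto
    also have "\<dots> = (\<Sum>e\<in>E. d e * t powr e)"
      by (rule sum.mono_neutral_right) (auto simp: E_def fP)
    finally show ?thesis .
  qed
  moreover have "finite E" using fP unfolding E_def by simp
  moreover have "\<forall>e\<in>E. e > 0 \<and> d e \<noteq> 0" using assms unfolding E_def P_def by auto
  ultimately show ?thesis by blast
qed

lemma lim_at0:
  fixes g :: "real \<Rightarrow> real"
  assumes "finite E" "E \<noteq> {}"
  shows "((\<lambda>t. \<Sum>e\<in>E. g e * t powr (e - Min E)) \<longlongrightarrow> g (Min E)) (at_right 0)"
proof -
  have lim: "((\<lambda>t. \<Sum>e\<in>E. g e * t powr (e - Min E)) \<longlongrightarrow> (\<Sum>e\<in>E. g e * (if e = Min E then 1 else 0))) (at_right 0)"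
  proof (intro tendsto_sum tendsto_mult tendsto_const)
    fix e assume e: "e \<in> E"
    show "((\<lambda>t. t powr (e - Min E)) \<longlongrightarrow> (if e = Min E then 1 else 0)) (at_right (0::real))"
    proof (cases "e = Min E")
      case True
      have "\<forall>\<^sub>F t in at_right (0::real). 1 = t powr (e - Min E)"
        using True by (auto simp: eventually_at_right_less intro: eventually_mono[OF eventually_at_right_less])
      then show ?thesis using True by (auto intro: tendsto_eventually)
    next
      case False
      then have "e > Min E" using e assms Min_le le_less by blast
      then show ?thesis using False
        by (auto intro!: tendsto_zero_powrI tendsto_ident_at eventually_at_right_less[THEN eventually_mono])
    qed
  qed
  have "(\<Sum>e\<in>E. g e * (if e = Min E then 1 else 0)) = g (Min E)"
    using assms by (simp add: sum.delta' if_distrib cong: if_cong)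
  with lim show ?thesis by simp
qed

lemma lim_top:
  fixes g :: "real \<Rightarrow> real"
  assumes "finite E" "E \<noteq> {}"
  shows "((\<lambda>t. \<Sum>e\<in>E. g e * t powr (e - Max E)) \<longlongrightarrow> g (Max E)) at_top"
proof -
  have lim: "((\<lambda>t. \<Sum>e\<in>E. g e * t powr (e - Max E)) \<longlongrightarrow> (\<Sum>e\<in>E. g e * (if e = Max E then 1 else 0))) at_top"
  proof (intro tendsto_sum tendsto_mult tendsto_const)
    fix e assume e: "e \<in> E"
    show "((\<lambda>t. t powr (e - Max E)) \<longlongrightarrow> (if e = Max E then 1 else 0)) (at_top::real filter)"
    proof (cases "e = Max E")
      case True
      have "\<forall>\<^sub>F t in at_top. 1 = (t::real) powr (e - Max E)"
        using True eventually_gt_at_top[of 0] by (auto elim!: eventually_mono)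
      then show ?thesis using True by (auto intro: tendsto_eventually)
    next
      case False
      then have "e < Max E" using e assms Max_ge le_less by blast
      then show ?thesis using False
        by (auto intro!: tendsto_neg_powr filterlim_ident)
    qed
  qed
  have "(\<Sum>e\<in>E. g e * (if e = Max E then 1 else 0)) = g (Max E)"
    using assms by (simp add: sum.delta' if_distrib cong: if_cong)
  with lim show ?thesis by simp
qed



lemma ratio_bound:
  fixes t y z A D c q e :: real
  assumes "t > 0" "A > 0" "D > 0" "y \<ge> A * t powr e" "z > 0" "z \<le> D * t powr (e - 1)" "c > 0" "q > 0"
  shows "(c * A powr q / D) * t powr (e*q - e + 1) \<le> c * y powr q / z"
proof -
  have "(c * A powr q / D) * t powr (e*q - e + 1) = c * (A * t powr e) powr q / (D * t powr (e - 1))"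
    using assms by (simp add: powr_mult powr_powr powr_diff powr_add field_simps mult.commute)
  also have "\<dots> \<le> c * y powr q / (D * t powr (e - 1))"
    using assms by (intro divide_right_mono mult_left_mono powr_mono2) auto
  also have "\<dots> \<le> c * y powr q / z"
    using assms by (intro divide_left_mono) auto
  finally show ?thesis .
qed

lemma powr_le_sum2:
  fixes t b N x :: real
  assumes "0 < b" "b \<le> t" "t \<le> N"
  shows "t powr x \<le> b powr x + N powr x"
proof (cases "x \<ge> 0")
  case True
  then have "t powr x \<le> N powr x" using assms by (intro powr_mono2) auto
  then show ?thesis using powr_ge_zero[of b x] powr_ge_zero[of N x] by linarith
next
  case False
  then have "t powr x \<le> b powr x" using assms by (intro powr_mono2') auto
  then show ?thesis using powr_ge_zero[of b x] powr_ge_zero[of N x] by linarith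
qed


lemma scale_lo:
  fixes t a y e :: real
  assumes "t > 0" "a < y * t powr (-e)" shows "a * t powr e \<le> y"
proof -
  have "a * t powr e \<le> y * t powr (-e) * t powr e"
    using assms by (intro mult_right_mono) auto
  also have "\<dots> = y" using assms by (simp add: mult.assoc powr_add[symmetric])
  finally show ?thesis .
qed
lemma scale_hi:
  fixes t a y e :: real
  assumes "t > 0" "y * t powr (-e) < a" shows "y \<le> a * t powr e"
proof -
  have "y = y * t powr (-e) * t powr e" using assms by (simp add: mult.assoc powr_add[symmetric])
  also have "\<dots> \<le> a * t powr e"
    using assms by (intro mult_right_mono) auto
  finally show ?thesis .
qed


lemma main_beta:
  fixes \<beta> d :: "real \<Rightarrow> real" and E :: "real set"
  assumes fin: "finite E" and Epos: "\<forall>e\<in>E. e > 0 \<and> d e \<noteq> 0"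
    and rep: "\<forall>t\<ge>0. \<beta> t = (\<Sum>e\<in>E. d e * t powr e)"
    and bpos: "\<forall>t>0. \<beta> t > 0"
    and mono: "\<And>t u. 0 < t \<Longrightarrow> t \<le> u \<Longrightarrow> \<beta> t \<le> \<beta> u"
    and dpos: "\<forall>t>0. deriv \<beta> t > 0"
    and c: "c1 > 0" "c2 > 0" "0 < q1" "q1 < 1" "q2 > 1"
  shows "\<exists>a1 a2 r1 r2. a1 > 0 \<and> a2 > 0 \<and> 0 < r1 \<and> r1 < 1 \<and> r2 > 1 \<and>
     (\<forall>t>0. a1 * t powr r1 + a2 * t powr r2 \<le> (c1 * \<beta> t powr q1 + c2 * \<beta> t powr q2) / deriv \<beta> t)"
proof -
  have der: "deriv \<beta> t = (\<Sum>e\<in>E. d e * e * t powr (e - 1))" if t: "t > 0" for t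
  proof -
    have "((\<lambda>x. \<Sum>e\<in>E. d e * x powr e) has_real_derivative (\<Sum>e\<in>E. d e * (e * t powr (e - 1)))) (at t)"
      using t by (intro DERIV_sum DERIV_cmult has_real_derivative_powr)
    then have "(\<beta> has_real_derivative (\<Sum>e\<in>E. d e * (e * t powr (e - 1)))) (at t)"
      by (rule has_field_derivative_transform_within_open[where S="{0<..}"]) (use t rep in auto)
    then show ?thesis by (simp add: DERIV_imp_deriv mult.assoc)
  qed
  have Ene: "E \<noteq> {}"
    using rep bpos[rule_format, of 1] by auto
  define e0 where "e0 = Min E"
  define e1 where "e1 = Max E"
  have e0E: "e0 \<in> E" and e1E: "e1 \<in> E" using fin Ene by (auto simp: e0_def e1_def)
  have e0p: "e0 > 0" and e1p: "e1 > 0" using Epos e0E e1E by auto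
  have L1: "((\<lambda>t. \<beta> t * t powr (-e0)) \<longlongrightarrow> d e0) (at_right 0)"
  proof -
    have "\<forall>\<^sub>F t in at_right 0. (\<Sum>e\<in>E. d e * t powr (e - Min E)) = \<beta> t * t powr (-e0)"
      by (rule eventually_mono[OF eventually_at_right_less])
         (auto simp: rep sum_distrib_right e0_def powr_add[symmetric] mult.assoc)
    from tendsto_cong[OF this] lim_at0[OF fin Ene, of d] show ?thesis by (simp add: e0_def)
  qed
  have L2: "((\<lambda>t. deriv \<beta> t * t powr (1-e0)) \<longlongrightarrow> d e0 * e0) (at_right 0)"
  proof -
    have "\<forall>\<^sub>F t in at_right 0. (\<Sum>e\<in>E. (d e * e) * t powr (e - Min E)) = deriv \<beta> t * t powr (1-e0)"
      by (rule eventually_mono[OF eventually_at_right_less])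
         (auto simp: der sum_distrib_right e0_def powr_add[symmetric] mult.assoc)
    from tendsto_cong[OF this] lim_at0[OF fin Ene, of "\<lambda>e. d e * e"] show ?thesis by (simp add: e0_def)
  qed
  have L3: "((\<lambda>t. \<beta> t * t powr (-e1)) \<longlongrightarrow> d e1) at_top"
  proof -
    have "\<forall>\<^sub>F t in at_top. (\<Sum>e\<in>E. d e * t powr (e - Max E)) = \<beta> t * t powr (-e1)"
      by (rule eventually_mono[OF eventually_gt_at_top[of 0]])
         (auto simp: rep sum_distrib_right e1_def powr_add[symmetric] mult.assoc)
    from tendsto_cong[OF this] lim_top[OF fin Ene, of d] show ?thesis by (simp add: e1_def)
  qed
  have L4: "((\<lambda>t. deriv \<beta> t * t powr (1-e1)) \<longlongrightarrow> d e1 * e1) at_top"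
  proof -
    have "\<forall>\<^sub>F t in at_top. (\<Sum>e\<in>E. (d e * e) * t powr (e - Max E)) = deriv \<beta> t * t powr (1-e1)"
      by (rule eventually_mono[OF eventually_gt_at_top[of 0]])
         (auto simp: der sum_distrib_right e1_def powr_add[symmetric] mult.assoc)
    from tendsto_cong[OF this] lim_top[OF fin Ene, of "\<lambda>e. d e * e"] show ?thesis by (simp add: e1_def)
  qed
  define A0 where "A0 = d e0"
  define A1 where "A1 = d e1"
  have "A0 \<ge> 0"
  proof (rule tendsto_lowerbound[OF L1[folded A0_def]])
    show "\<forall>\<^sub>F t in at_right 0. 0 \<le> \<beta> t * t powr (-e0)"
      by (rule eventually_mono[OF eventually_at_right_less]) (use bpos in \<open>auto intro!: less_imp_le\<close>)
  qed simp
  then have A0p: "A0 > 0" using Epos e0E by (auto simp: A0_def)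
  have "A1 \<ge> 0"
  proof (rule tendsto_lowerbound[OF L3[folded A1_def]])
    show "\<forall>\<^sub>F t in at_top. 0 \<le> \<beta> t * t powr (-e1)"
      by (rule eventually_mono[OF eventually_gt_at_top[of 0]]) (use bpos in \<open>auto intro!: less_imp_le\<close>)
  qed simp
  then have A1p: "A1 > 0" using Epos e1E by (auto simp: A1_def)
  define x0 where "x0 = e0 * q1 - e0 + 1"
  define x1 where "x1 = e1 * q2 - e1 + 1"
  have "e0 * q1 < e0 * 1" using e0p c by (intro mult_strict_left_mono) auto
  then have x0: "x0 < 1" unfolding x0_def by simp
  have "e1 * 1 < e1 * q2" using e1p c by (intro mult_strict_left_mono) auto
  then have x1: "x1 > 1" unfolding x1_def by simp
  define r1 where "r1 = max (1/2) x0"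
  define r2 where "r2 = (1 + x1) / 2"
  have r1: "0 < r1" "r1 < 1" "x0 \<le> r1" using x0 by (auto simp: r1_def)
  have r2: "1 < r2" "r2 \<le> x1" using x1 by (auto simp: r2_def)
  define F where "F t = (c1 * \<beta> t powr q1 + c2 * \<beta> t powr q2) / deriv \<beta> t" for t
  define K0 where "K0 = c1 * (A0/2) powr q1 / (2 * A0 * e0)"
  define K1 where "K1 = c2 * (A1/2) powr q2 / (2 * A1 * e1)"
  have K0p: "K0 > 0" using c A0p e0p by (simp add: K0_def)
  have K1p: "K1 > 0" using c A1p e1p by (simp add: K1_def)
  have ev0: "\<forall>\<^sub>F t in at_right 0. A0/2 < \<beta> t * t powr (-e0) \<and> deriv \<beta> t * t powr (1-e0) < 2 * A0 * e0 \<and> t < 1"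
  proof -
    have g1: "\<forall>\<^sub>F t in at_right 0. A0/2 < \<beta> t * t powr (-e0)"
      using order_tendstoD(1)[OF L1[folded A0_def], of "A0/2"] A0p by simp
    have "A0 * e0 < 2 * A0 * e0" using A0p e0p by simp
    then have g2: "\<forall>\<^sub>F t in at_right 0. deriv \<beta> t * t powr (1-e0) < 2 * A0 * e0"
      using order_tendstoD(2)[OF L2[folded A0_def]] by blast
    have g3: "\<forall>\<^sub>F t in at_right (0::real). t < 1"
      unfolding eventually_at_right_field by (intro exI[of _ 1]) auto
    show ?thesis using g1 g2 g3 by (intro eventually_conj)
  qed
  then obtain b0 :: real where b0: "b0 > 0" and hb0: "\<And>t. 0 < t \<Longrightarrow> t < b0 \<Longrightarrow>
      A0/2 < \<beta> t * t powr (-e0) \<and> deriv \<beta> t * t powr (1-e0) < 2 * A0 * e0 \<and> t < 1"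
    unfolding eventually_at_right_field by auto
  define b where "b = min b0 1"
  have b: "0 < b" "b \<le> 1" using b0 by (auto simp: b_def)
  have Fge1: "c1 * \<beta> t powr q1 / deriv \<beta> t \<le> F t" if t: "t > 0" for t
  proof -
    have "0 \<le> c2 * \<beta> t powr q2" using c by simp
    then have "c1 * \<beta> t powr q1 \<le> c1 * \<beta> t powr q1 + c2 * \<beta> t powr q2" by linarith
    then show ?thesis unfolding F_def using dpos t by (intro divide_right_mono) auto
  qed
  have Fge2: "c2 * \<beta> t powr q2 / deriv \<beta> t \<le> F t" if t: "t > 0" for t
  proof -
    have "0 \<le> c1 * \<beta> t powr q1" using c by simp
    then have "c2 * \<beta> t powr q2 \<le> c1 * \<beta> t powr q1 + c2 * \<beta> t powr q2" by linarith
    then show ?thesis unfolding F_def using dpos t by (intro divide_right_mono) auto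
  qed
  have near0: "K0 * t powr r1 \<le> F t" if t: "0 < t" "t < b" for t
  proof -
    have tb0: "t < b0" using t by (simp add: b_def)
    have t1: "t < 1" using t b by linarith
    note hh = hb0[OF t(1) tb0]
    have hh2: "deriv \<beta> t * t powr (-(e0-1)) < 2 * A0 * e0" using hh by simp
    have h1: "A0/2 * t powr e0 \<le> \<beta> t" using scale_lo[OF t(1), of "A0/2" "\<beta> t" e0] hh by simp
    have h2: "deriv \<beta> t \<le> 2 * A0 * e0 * t powr (e0 - 1)"
      using scale_hi[OF t(1) hh2] .
    have "K0 * t powr r1 \<le> K0 * t powr x0"
      using K0p t t1 by (intro mult_left_mono powr_mono'[OF r1(3)]) simp_all
    also have "\<dots> \<le> c1 * \<beta> t powr q1 / deriv \<beta> t"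
      unfolding K0_def x0_def
      by (rule ratio_bound[OF t(1) _ _ h1 _ h2]) (use A0p e0p c dpos t in simp_all)
    also have "\<dots> \<le> F t" by (rule Fge1[OF t(1)])
    finally show ?thesis .
  qed
  have evT: "\<forall>\<^sub>F t in at_top. A1/2 < \<beta> t * t powr (-e1) \<and> deriv \<beta> t * t powr (1-e1) < 2 * A1 * e1 \<and> t > 1"
  proof -
    have g1: "\<forall>\<^sub>F t in at_top. A1/2 < \<beta> t * t powr (-e1)"
      using order_tendstoD(1)[OF L3[folded A1_def], of "A1/2"] A1p by simp
    have "A1 * e1 < 2 * A1 * e1" using A1p e1p by simp
    then have g2: "\<forall>\<^sub>F t in at_top. deriv \<beta> t * t powr (1-e1) < 2 * A1 * e1"
      using order_tendstoD(2)[OF L4[folded A1_def]] by blast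
    have g3: "\<forall>\<^sub>F t in at_top. t > (1::real)" by (rule eventually_gt_at_top)
    show ?thesis using g1 g2 g3 by (intro eventually_conj)
  qed
  then obtain N :: real where hN: "\<And>t. t \<ge> N \<Longrightarrow>
      A1/2 < \<beta> t * t powr (-e1) \<and> deriv \<beta> t * t powr (1-e1) < 2 * A1 * e1 \<and> t > 1"
    unfolding eventually_at_top_linorder by auto
  have nearT: "K1 * t powr r2 \<le> F t" if t: "t \<ge> N" for t
  proof -
    note hh = hN[OF t]
    have t1: "t > 1" and t0: "t > 0" using hh by simp_all
    have hh2: "deriv \<beta> t * t powr (-(e1-1)) < 2 * A1 * e1" using hh by simp
    have h1: "A1/2 * t powr e1 \<le> \<beta> t" using scale_lo[OF t0, of "A1/2" "\<beta> t" e1] hh by simp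
    have h2: "deriv \<beta> t \<le> 2 * A1 * e1 * t powr (e1 - 1)"
      using scale_hi[OF t0 hh2] .
    have "K1 * t powr r2 \<le> K1 * t powr x1"
      using K1p t1 by (intro mult_left_mono powr_mono[OF r2(2)]) simp_all
    also have "\<dots> \<le> c2 * \<beta> t powr q2 / deriv \<beta> t"
      unfolding K1_def x1_def
      by (rule ratio_bound[OF t0 _ _ h1 _ h2]) (use A1p e1p c dpos t0 in simp_all)
    also have "\<dots> \<le> F t" by (rule Fge2[OF t0])
    finally show ?thesis .
  qed
  define N' where "N' = max N (1::real)"
  define B where "B = (\<Sum>e\<in>E. \<bar>d e\<bar> * e * (b powr (e - 1) + N' powr (e - 1)))"
  define m where "m = c1 * \<beta> b powr q1 / B"
  have middle: "deriv \<beta> t \<le> B \<and> m \<le> F t" if t: "b \<le> t" "t \<le> N'" for t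
  proof -
    have tp: "t > 0" using t b by linarith
    have dB: "deriv \<beta> t \<le> B"
      unfolding der[OF tp] B_def
    proof (rule sum_mono)
      fix e assume e: "e \<in> E"
      have ep: "e > 0" using Epos e by simp
      have "d e * e * t powr (e - 1) \<le> \<bar>d e\<bar> * e * t powr (e - 1)"
        using ep by (intro mult_right_mono) simp_all
      also have "\<dots> \<le> \<bar>d e\<bar> * e * (b powr (e - 1) + N' powr (e - 1))"
        using ep by (intro mult_left_mono powr_le_sum2[OF b(1) t]) simp_all
      finally show "d e * e * t powr (e - 1) \<le> \<bar>d e\<bar> * e * (b powr (e - 1) + N' powr (e - 1))" .
    qed
    have dp: "deriv \<beta> t > 0" using dpos tp by simp
    have Bp: "B > 0" using dB dp by linarith
    have bp: "\<beta> b > 0" using bpos b by simp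
    have "\<beta> b powr q1 \<le> \<beta> t powr q1"
      using mono[OF b(1) t(1)] bp c by (intro powr_mono2) simp_all
    then have "m \<le> c1 * \<beta> t powr q1 / B"
      unfolding m_def using c Bp by (intro divide_right_mono mult_left_mono) simp_all
    also have "\<dots> \<le> c1 * \<beta> t powr q1 / deriv \<beta> t"
      using c dp dB by (intro divide_left_mono) simp_all
    also have "\<dots> \<le> F t" by (rule Fge1[OF tp])
    finally show ?thesis using dB by simp
  qed
  have "b \<le> N'" using b unfolding N'_def by linarith
  then have "deriv \<beta> b \<le> B" using middle[of b] by simp
  moreover have "deriv \<beta> b > 0" using dpos b by simp
  ultimately have Bp: "B > 0" by linarith
  have N'1: "N' \<ge> 1" by (simp add: N'_def)
  have mp: "m > 0" proof -
    have "\<beta> b > 0" using bpos b by simp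
    then show ?thesis unfolding m_def using c Bp by simp
  qed
  have Np: "N' powr r2 > 0" using N'1 by simp
  define a where "a = min K0 (min K1 (m / N' powr r2)) / 2"
  have ap: "a > 0" unfolding a_def using K0p K1p mp Np by simp
  have aK0: "2 * a \<le> K0" and aK1: "2 * a \<le> K1" and am0: "2 * a \<le> m / N' powr r2"
    unfolding a_def by auto
  have am: "2 * a * N' powr r2 \<le> m" using am0 Np by (simp add: pos_le_divide_eq)
  have r12: "r1 \<le> r2" using r1 r2 by linarith
  have "\<forall>t>0. a * t powr r1 + a * t powr r2 \<le> F t"
  proof (intro allI impI)
    fix t :: real assume t0: "t > 0"
    show "a * t powr r1 + a * t powr r2 \<le> F t"
    proof (cases "t < b")
      case True
      then have t1: "t \<le> 1" using b by linarith
      have "t powr r2 \<le> t powr r1" using powr_mono'[OF r12, of t] t0 t1 by simp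
      then have "a * t powr r1 + a * t powr r2 \<le> (2 * a) * t powr r1"
        using ap by (simp add: algebra_simps)
      also have "\<dots> \<le> K0 * t powr r1" using aK0 by (intro mult_right_mono) simp_all
      also have "\<dots> \<le> F t" using near0[OF t0 True] .
      finally show ?thesis .
    next
      case False
      show ?thesis
      proof (cases "t \<ge> N")
        case True
        have t1: "t \<ge> 1" using hN[OF True] by simp
        have "t powr r1 \<le> t powr r2" using powr_mono[OF r12 t1] .
        then have "a * t powr r1 + a * t powr r2 \<le> (2 * a) * t powr r2"
          using ap by (simp add: algebra_simps)
        also have "\<dots> \<le> K1 * t powr r2" using aK1 by (intro mult_right_mono) simp_all
        also have "\<dots> \<le> F t" using nearT[OF True] .
        finally show ?thesis .
      next
        case False2: False
        have tb: "b \<le> t" using False by linarith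
        have tN: "t \<le> N'" using False2 unfolding N'_def by linarith
        have "t powr r1 \<le> N' powr r1" using r1 t0 tN by (intro powr_mono2) simp_all
        also have "\<dots> \<le> N' powr r2" using powr_mono[OF r12 N'1] .
        finally have p1: "t powr r1 \<le> N' powr r2" .
        have p2: "t powr r2 \<le> N' powr r2" using r2 t0 tN by (intro powr_mono2) simp_all
        have "a * t powr r1 + a * t powr r2 \<le> 2 * a * N' powr r2"
        proof -
          have "a * t powr r1 \<le> a * N' powr r2" by (rule mult_left_mono[OF p1]) (use ap in simp)
          moreover have "a * t powr r2 \<le> a * N' powr r2" by (rule mult_left_mono[OF p2]) (use ap in simp)
          ultimately show ?thesis by linarith
        qed
        also have "\<dots> \<le> m" by (rule am)
        also have "\<dots> \<le> F t" using middle[OF tb tN] by simp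
        finally show ?thesis .
      qed
    qed
  qed
  then show ?thesis unfolding F_def using ap r1 r2 by blast
qed



theorem lemma6:
  fixes \<gamma> \<Psi> :: "real \<Rightarrow> real"
  assumes "K_P_inv \<gamma>" and "K_FxT \<Psi>"
  shows "\<exists>l::real. l \<ge> 1 \<and> (\<exists>\<Psi>'. K_FxT \<Psi>' \<and>
           (\<forall>s>0. l * (\<gamma> s) powr (l - 1) * deriv \<gamma> s * \<Psi> s \<ge> \<Psi>' ((\<gamma> s) powr l)))"
proof -
  from assms(1) obtain \<beta> where Kg: "K_inf \<gamma>" and KP: "K_P \<beta>"
    and bg: "\<forall>s\<ge>0. \<beta> (\<gamma> s) = s" and gb: "\<forall>s\<ge>0. \<gamma> (\<beta> s) = s"
    unfolding K_P_inv_def by blast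
  from KP obtain n :: nat and c p :: "nat \<Rightarrow> real" where Kb: "K_inf \<beta>" and cp: "\<forall>i<n. c i \<noteq> 0 \<and> p i > 0"
    and brep: "\<forall>s\<ge>0. \<beta> s = (\<Sum>i<n. c i * s powr p i)"
    and bder: "\<forall>s>0. \<beta> differentiable at s \<and> deriv \<beta> s > 0"
    unfolding K_P_def by blast
  from assms(2) obtain c1 c2 q1 q2 :: real where cq: "c1 > 0" "c2 > 0" "0 < q1" "q1 < 1" "q2 > 1"
    and Psi: "\<forall>s\<ge>0. \<Psi> s = c1 * s powr q1 + c2 * s powr q2"
    unfolding K_FxT_def by blast
  obtain E :: "real set" and d :: "real \<Rightarrow> real" where Ed: "finite E" "\<forall>e\<in>E. e > 0 \<and> d e \<noteq> 0"
    and Erep: "\<forall>t. (\<Sum>i<n. c i * t powr p i) = (\<Sum>e\<in>E. d e * t powr e)"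
    using regroup[of n p c] cp by blast
  have rep: "\<forall>t\<ge>0. \<beta> t = (\<Sum>e\<in>E. d e * t powr e)" using brep Erep by simp
  have bsm: "strict_mono_on {0..} \<beta>" and b0: "\<beta> 0 = 0" using Kb unfolding K_inf_def by auto
  have gsm: "strict_mono_on {0..} \<gamma>" and g0: "\<gamma> 0 = 0" and gc: "continuous_on {0..} \<gamma>"
    using Kg unfolding K_inf_def by auto
  have bpos: "\<forall>t>0. \<beta> t > 0"
    using strict_mono_onD[OF bsm] b0 by force
  have mono: "\<beta> t \<le> \<beta> u" if "0 < t" "t \<le> u" for t u
  proof (cases "t = u")
    case False
    then show ?thesis using strict_mono_onD[OF bsm, of t u] that by force
  qed simp
  have dpos: "\<forall>t>0. deriv \<beta> t > 0" using bder by blast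
  obtain a1 a2 r1 r2 :: real where ar: "a1 > 0" "a2 > 0" "0 < r1" "r1 < 1" "r2 > 1"
    and main: "\<forall>t>0. a1 * t powr r1 + a2 * t powr r2 \<le> (c1 * \<beta> t powr q1 + c2 * \<beta> t powr q2) / deriv \<beta> t"
    using main_beta[OF Ed rep bpos mono dpos cq] by blast
  define \<Psi>' where "\<Psi>' x = a1 * x powr r1 + a2 * x powr r2" for x :: real
  have KF: "K_FxT \<Psi>'" unfolding K_FxT_def \<Psi>'_def using ar by blast
  have H: "\<forall>s>0. 1 * (\<gamma> s) powr (1 - 1) * deriv \<gamma> s * \<Psi> s \<ge> \<Psi>' ((\<gamma> s) powr 1)"
  proof (intro allI impI)
    fix s :: real assume s: "s > 0"
    define t where "t = \<gamma> s"
    have tp: "t > 0" using strict_mono_onD[OF gsm, of 0 s] s g0 by (simp add: t_def)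
    have bt: "\<beta> t = s" using bg s by (simp add: t_def)
    have Db: "DERIV \<beta> (\<gamma> s) :> deriv \<beta> t"
      using bder tp DERIV_deriv_iff_real_differentiable by (simp add: t_def)
    have cont: "isCont \<gamma> s"
    proof -
      have "continuous_on {0<..} \<gamma>" using gc by (rule continuous_on_subset) auto
      then show ?thesis using s continuous_on_eq_continuous_at[of "{0<..}" \<gamma>] by simp
    qed
    have Dg: "DERIV \<gamma> s :> inverse (deriv \<beta> t)"
      by (rule DERIV_inverse_function[OF Db _ _ _ _ cont, of 0 "s+1"]) (use dpos tp s bg in auto)
    then have dg: "deriv \<gamma> s = inverse (deriv \<beta> t)" by (rule DERIV_imp_deriv)
    have Ps: "\<Psi> s = c1 * \<beta> t powr q1 + c2 * \<beta> t powr q2" using Psi s bt by simp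
    have "\<Psi>' t \<le> (c1 * \<beta> t powr q1 + c2 * \<beta> t powr q2) / deriv \<beta> t"
      using main tp unfolding \<Psi>'_def by blast
    then show "1 * (\<gamma> s) powr (1 - 1) * deriv \<gamma> s * \<Psi> s \<ge> \<Psi>' ((\<gamma> s) powr 1)"
      using tp by (simp add: t_def[symmetric] dg Ps divide_inverse mult.commute)
  qed
  show ?thesis
    by (rule exI[of _ "1::real"], rule conjI, simp, rule exI[of _ \<Psi>'], rule conjI, rule KF, rule H)
qed

end
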